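(* For real $u,w$ and an integer $n\ge 1$ let $g_n(u,w):=\sum_{i=1}^n i\,w^{i-1}u^{n-i}$. Then for every even integer $n\ge 6$, $$g_n(u,w)=(u^{n-1}+w^{n-1})+2u^{n-2}w+\sum_{i=1}^{(n-4)/2}u^{2i}w^{n-1-2i}+(u+w)\sum_{i=0}^{(n-4)/2}(n-1-2i)u^{2i}w^{n-2-2i}.$$ Furthermore, let $\beta>0$, $k>0$, and let $\delta$ be the involution defined in the context, $w=\delta(u)$. Then for all even integers $n\ge 2$: (i) if $-k<u_0<0$, then $g_n(u,w)<0$ for all $u\in(0,u_1)$; (ii) if $u_0<-k$, then $g_n(w,u)>0$ for all $u\in(0,k)$.
   Context: $\Phi(u)=\beta\left(-\frac{u^4}{4}+\frac{k+u_0}{3}u^3-\frac{ku_0}{2}u^2\right)$. Case $-k<u_0<0$: $u_1$ is the unique point of $(0,k)$ with $\Phi(u_1)=\Phi(u_0)$, and for $u\in(0,u_1)$, $\delta(u)$ is the unique $w\in(u_0,0)$ with $\Phi(w)=\Phi(u)$. Case $u_0<-k$: $w_2$ is the unique point of $(u_0,0)$ with $\Phi(w_2)=\Phi(k)$, and for $u\in(0,k)$, $\delta(u)$ is the unique $w\in(w_2,0)$ with $\Phi(w)=\Phi(u)$. *)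

theory Defs
  imports Complex_Main
begin

definition g :: "nat \<Rightarrow> real \<Rightarrow> real \<Rightarrow> real" where
  "g n u w = (\<Sum>i=1..n. real i * w ^ (i - 1) * u ^ (n - i))"

definition Phi :: "real \<Rightarrow> real \<Rightarrow> real \<Rightarrow> real \<Rightarrow> real" where
  "Phi beta k u0 u = beta * (- (u ^ 4) / 4 + (k + u0) / 3 * u ^ 3 - k * u0 / 2 * u ^ 2)"

text \<open>Case -k < u0 < 0: u1 and the involution delta on (0,u1).\<close>
definition u1 :: "real \<Rightarrow> real \<Rightarrow> real \<Rightarrow> real" where
  "u1 beta k u0 = (THE v. 0 < v \<and> v < k \<and> Phi beta k u0 v = Phi beta k u0 u0)"

definition delta1 :: "real \<Rightarrow> real \<Rightarrow> real \<Rightarrow> real \<Rightarrow> real" where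
  "delta1 beta k u0 u = (THE w. u0 < w \<and> w < 0 \<and> Phi beta k u0 w = Phi beta k u0 u)"

text \<open>Case u0 < -k: w2 and the involution delta on (0,k).\<close>
definition w2 :: "real \<Rightarrow> real \<Rightarrow> real \<Rightarrow> real" where
  "w2 beta k u0 = (THE w. u0 < w \<and> w < 0 \<and> Phi beta k u0 w = Phi beta k u0 k)"

definition delta2 :: "real \<Rightarrow> real \<Rightarrow> real \<Rightarrow> real \<Rightarrow> real" where
  "delta2 beta k u0 u = (THE w. w2 beta k u0 < w \<and> w < 0 \<and> Phi beta k u0 w = Phi beta k u0 u)"

end

theory Submission
  imports Defs
begin

lemma Phi_deriv:
  "(Phi b k u0 has_real_derivative (- b * x * (x - k) * (x - u0))) (at x)"
  unfolding Phi_def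
  by (rule derivative_eq_intros refl | simp)+ (simp add: algebra_simps power2_eq_square power3_eq_cube)

lemma Phi_cont: "continuous_on S (Phi b k u0)"
  unfolding Phi_def by (intro continuous_intros) auto

lemma Phi_dec:
  assumes "b > 0" "k > 0" "u0 \<le> x" "x < y" "y \<le> 0"
  shows "Phi b k u0 y < Phi b k u0 x"
proof (rule DERIV_neg_imp_decreasing_open[OF assms(4)])
  fix t assume t: "x < t" "t < y"
  have "- b * t * (t - k) * (t - u0) < 0"
  proof -
    have "- b * t > 0" using t assms by (simp add: mult_pos_neg)
    moreover have "(t - k) * (t - u0) < 0" using t assms by (simp add: mult_neg_pos)
    ultimately show ?thesis by (metis mult.assoc mult_pos_neg)
  qed
  then show "\<exists>y. DERIV (Phi b k u0) t :> y \<and> y < 0" using Phi_deriv by blast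
qed (rule Phi_cont)

lemma Phi_inc:
  assumes "b > 0" "k > 0" "u0 < 0" "0 \<le> x" "x < y" "y \<le> k"
  shows "Phi b k u0 x < Phi b k u0 y"
proof (rule DERIV_pos_imp_increasing_open[OF assms(5)])
  fix t assume t: "x < t" "t < y"
  have "- b * t * (t - k) * (t - u0) > 0"
  proof -
    have "- b * t < 0" using t assms by simp
    moreover have "(t - k) * (t - u0) < 0" using t assms by (simp add: mult_neg_pos)
    ultimately show ?thesis by (metis mult.assoc mult_neg_neg)
  qed
  then show "\<exists>y. DERIV (Phi b k u0) t :> y \<and> y > 0" using Phi_deriv by blast
qed (rule Phi_cont)

lemma Phi0: "Phi b k u0 0 = 0" by (simp add: Phi_def)

lemma Phi_sym: "Phi b k u0 u - Phi b k u0 (-u) = 2 * b * (k + u0) * u^3 / 3"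
  by (simp add: Phi_def field_simps)

lemma Phi_k_u0: "Phi b k u0 k - Phi b k u0 u0 = b * (k + u0) * (k - u0) ^ 3 / 12"
  by (simp add: Phi_def field_simps power2_eq_square power3_eq_cube power4_eq_xxxx)

lemma g0: "g 0 u w = 0" by (simp add: g_def)

lemma g_Suc: "g (Suc n) u w = u * g n u w + real (Suc n) * w ^ n"
proof -
  have "g (Suc n) u w = (\<Sum>i=1..n. real i * w ^ (i - 1) * u ^ (Suc n - i)) + real (Suc n) * w ^ n"
    by (simp add: g_def)
  also have "(\<Sum>i=1..n. real i * w ^ (i - 1) * u ^ (Suc n - i)) = u * g n u w"
    unfolding g_def sum_distrib_left
    by (rule sum.cong) (auto simp: Suc_diff_le)
  finally show ?thesis by simp
qed

lemma g_SS: "g (Suc (Suc n)) u w = u^2 * g n u w + w ^ n * (real (Suc n) * u + real (Suc (Suc n)) * w)"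
  by (simp add: g_Suc algebra_simps power2_eq_square)

lemma g_neg: "0 < u \<Longrightarrow> w < - u \<Longrightarrow> g (2 * Suc m) u w < 0"
proof (induction m)
  case 0
  then show ?case using g_SS[of 0 u w] by (simp add: g0 numeral_2_eq_2)
next
  case (Suc m)
  have e: "2 * Suc (Suc m) = Suc (Suc (2 * Suc m))" by simp
  have a: "u^2 * g (2 * Suc m) u w < 0" using Suc by (simp add: mult_pos_neg)
  have "w \<noteq> 0" using Suc.prems by simp
  then have "(w^2) ^ Suc m > 0" by simp
  then have "w ^ (2 * Suc m) > 0" by (simp only: power_mult)
  moreover have "real (Suc (2 * Suc m)) * u + real (Suc (Suc (2 * Suc m))) * w < 0"
  proof -
    have "real (Suc (2 * Suc m)) * (u + w) < 0" using Suc.prems by (simp add: mult_pos_neg)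
    moreover have "w < 0" using Suc.prems by simp
    ultimately show ?thesis by (simp add: algebra_simps)
  qed
  ultimately have "w ^ (2 * Suc m) * (real (Suc (2 * Suc m)) * u + real (Suc (Suc (2 * Suc m))) * w) < 0"
    by (simp add: mult_pos_neg)
  with a show ?case unfolding e g_SS by simp
qed

lemma g_pos: "0 < u \<Longrightarrow> - u < w \<Longrightarrow> w < 0 \<Longrightarrow> g (2 * Suc m) w u > 0"
proof (induction m)
  case 0
  then show ?case using g_SS[of 0 w u] by (simp add: g0 numeral_2_eq_2)
next
  case (Suc m)
  have e: "2 * Suc (Suc m) = Suc (Suc (2 * Suc m))" by simp
  have a: "w^2 * g (2 * Suc m) w u > 0" using Suc by simp
  have "u ^ (2 * Suc m) > 0" using Suc.prems by simp
  moreover have "real (Suc (2 * Suc m)) * w + real (Suc (Suc (2 * Suc m))) * u > 0"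
  proof -
    have "real (Suc (2 * Suc m)) * (u + w) > 0" using Suc.prems by simp
    then show ?thesis using Suc.prems by (simp add: algebra_simps)
  qed
  ultimately have "u ^ (2 * Suc m) * (real (Suc (2 * Suc m)) * w + real (Suc (Suc (2 * Suc m))) * u) > 0"
    by simp
  with a show ?case unfolding e g_SS by simp
qed

definition S1 :: "nat \<Rightarrow> real \<Rightarrow> real \<Rightarrow> real" where
  "S1 p u w = (\<Sum>i=1..p. u ^ (2 * i) * w ^ (2 * p + 3 - 2 * i))"

definition S2 :: "nat \<Rightarrow> real \<Rightarrow> real \<Rightarrow> real" where
  "S2 p u w = (\<Sum>i=0..p. real (2 * p + 3 - 2 * i) * u ^ (2 * i) * w ^ (2 * p + 2 - 2 * i))"

lemma S1_Suc: "S1 (Suc p) u w = u^2 * w^(2*p+3) + u^2 * S1 p u w"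
proof -
  have "S1 (Suc p) u w = u^2 * w^(2*p+3) + (\<Sum>i=Suc 1..Suc p. u ^ (2 * i) * w ^ (2 * Suc p + 3 - 2 * i))"
    unfolding S1_def by (subst sum.atLeast_Suc_atMost) (simp_all add: ac_simps power2_eq_square)
  also have "(\<Sum>i=Suc 1..Suc p. u ^ (2 * i) * w ^ (2 * Suc p + 3 - 2 * i))
      = (\<Sum>i=1..p. u ^ (2 * Suc i) * w ^ (2 * Suc p + 3 - 2 * Suc i))"
    by (rule sum.shift_bounds_cl_Suc_ivl)
  also have "\<dots> = u^2 * S1 p u w"
    unfolding S1_def sum_distrib_left
  proof (rule sum.cong)
    fix i assume "i \<in> {1..p}"
    have "2 * Suc p + 3 - 2 * Suc i = 2 * p + 3 - 2 * i" by simp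
    moreover have "u ^ (2 * Suc i) = u^2 * u^(2*i)" by (metis mult_Suc_right power_add)
    ultimately show "u ^ (2 * Suc i) * w ^ (2 * Suc p + 3 - 2 * Suc i) = u^2 * (u ^ (2 * i) * w ^ (2 * p + 3 - 2 * i))"
      by (simp only: mult_ac)
  qed simp
  finally show ?thesis .
qed

lemma S2_Suc: "S2 (Suc p) u w = real (2*p+5) * w^(2*p+4) + u^2 * S2 p u w"
proof -
  have "S2 (Suc p) u w = real (2*p+5) * w^(2*p+4) + (\<Sum>i=Suc 0..Suc p. real (2 * Suc p + 3 - 2 * i) * u ^ (2 * i) * w ^ (2 * Suc p + 2 - 2 * i))"
    unfolding S2_def by (subst sum.atLeast_Suc_atMost) (simp_all add: ac_simps power_add numeral_eq_Suc)
  also have "(\<Sum>i=Suc 0..Suc p. real (2 * Suc p + 3 - 2 * i) * u ^ (2 * i) * w ^ (2 * Suc p + 2 - 2 * i))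
      = (\<Sum>i=0..p. real (2 * Suc p + 3 - 2 * Suc i) * u ^ (2 * Suc i) * w ^ (2 * Suc p + 2 - 2 * Suc i))"
    by (rule sum.shift_bounds_cl_Suc_ivl)
  also have "\<dots> = u^2 * S2 p u w"
    unfolding S2_def sum_distrib_left
  proof (rule sum.cong)
    fix i assume "i \<in> {0..p}"
    have "2 * Suc p + 3 - 2 * Suc i = 2 * p + 3 - 2 * i" "2 * Suc p + 2 - 2 * Suc i = 2 * p + 2 - 2 * i" by simp_all
    moreover have "u ^ (2 * Suc i) = u^2 * u^(2*i)" by (metis mult_Suc_right power_add)
    ultimately show "real (2 * Suc p + 3 - 2 * Suc i) * u ^ (2 * Suc i) * w ^ (2 * Suc p + 2 - 2 * Suc i) = u^2 * (real (2 * p + 3 - 2 * i) * u ^ (2 * i) * w ^ (2 * p + 2 - 2 * i))"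
      by (simp only: mult_ac)
  qed simp
  finally show ?thesis .
qed

lemma g_ident_clean:
  "g (2*p+4) u w = u^(2*p+3) + w^(2*p+3) + 2 * u^(2*p+2) * w + S1 p u w + (u + w) * S2 p u w"
proof (induction p)
  case 0
  have "g 4 u w = g (Suc (Suc (Suc (Suc 0)))) u w" by (simp add: numeral_eq_Suc)
  also have "\<dots> = u^3 + w^3 + 2 * u^2 * w + (u + w) * (3 * w^2)"
    unfolding g_SS g0 by (simp add: algebra_simps power2_eq_square power3_eq_cube)
  finally show ?case by (simp add: S1_def S2_def power2_eq_square)
next
  case (Suc p)
  have e: "2 * Suc p + 4 = Suc (Suc (2*p+4))" by simp
  have p1: "u^(2 * Suc p + 3) = u^2 * u^(2*p+3)" "w^(2 * Suc p + 3) = w^2 * w^(2*p+3)"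
     "u^(2 * Suc p + 2) = u^2 * u^(2*p+2)" "w^(2*p+3) * w = w^(2*p+4)" "w^(2*p+4) * w = w^2 * w^(2*p+3)"
  proof -
    have q: "2 * Suc p + 3 = 2 + (2*p+3)" "2 * Suc p + 2 = 2 + (2*p+2)" "2*p+4 = Suc (2*p+3)" "Suc (2*p+4) = 2 + (2*p+3)" by simp_all
    show "u^(2 * Suc p + 3) = u^2 * u^(2*p+3)" "w^(2 * Suc p + 3) = w^2 * w^(2*p+3)"
     "u^(2 * Suc p + 2) = u^2 * u^(2*p+2)" "w^(2*p+3) * w = w^(2*p+4)"
      by (simp_all only: q power_add power_Suc2)
    show "w^(2*p+4) * w = w^2 * w^(2*p+3)"
      by (subst q(3), simp only: power_Suc2 power2_eq_square mult_ac)
  qed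
  have p2: "w^(2*p+4) = w * w^(2*p+3)"
  proof -
    have q: "2*p+4 = Suc (2*p+3)" by simp
    show ?thesis by (subst q, simp only: power_Suc)
  qed
  show ?case unfolding e g_SS Suc S1_Suc S2_Suc p1 p2
    by (simp add: algebra_simps power2_eq_square)
qed

lemma the_eqI: "P x \<Longrightarrow> (\<And>y. P y \<Longrightarrow> y = x) \<Longrightarrow> (THE y. P y) = x"
  by (rule the_equality)

theorem lemma3p6:
  fixes beta k u0 :: real
  assumes "beta > 0" and "k > 0"
  shows "(\<forall>(n::nat) (u::real) (w::real). even n \<and> 6 \<le> n \<longrightarrow>
            g n u w = (u ^ (n - 1) + w ^ (n - 1)) + 2 * u ^ (n - 2) * w
              + (\<Sum>i=1..(n - 4) div 2. u ^ (2 * i) * w ^ (n - 1 - 2 * i))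
              + (u + w) * (\<Sum>i=0..(n - 4) div 2. real (n - 1 - 2 * i) * u ^ (2 * i) * w ^ (n - 2 - 2 * i)))
         \<and> (\<forall>n::nat. even n \<and> 2 \<le> n \<longrightarrow>
              ((- k < u0 \<and> u0 < 0 \<longrightarrow>
                  (\<forall>u. 0 < u \<and> u < u1 beta k u0 \<longrightarrow> g n u (delta1 beta k u0 u) < 0))
               \<and> (u0 < - k \<longrightarrow>
                  (\<forall>u. 0 < u \<and> u < k \<longrightarrow> g n (delta2 beta k u0 u) u > 0))))"
proof (rule conjI; intro allI impI)
  fix n :: nat and u w :: real
  assume n: "even n \<and> 6 \<le> n"
  then obtain q where q: "n = 2 * q" by (auto elim: evenE)
  define p where "p = q - 2"
  have p: "n = 2 * p + 4" using q n unfolding p_def by simp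
  have pd: "(n - 4) div 2 = p" using p by simp
  have A: "(\<Sum>i=1..(n - 4) div 2. u ^ (2 * i) * w ^ (n - 1 - 2 * i)) = S1 p u w"
    unfolding pd S1_def by (rule sum.cong) (simp_all add: p ac_simps)
  have B: "(\<Sum>i=0..(n - 4) div 2. real (n - 1 - 2 * i) * u ^ (2 * i) * w ^ (n - 2 - 2 * i)) = S2 p u w"
    unfolding pd S2_def by (rule sum.cong) (simp_all add: p)
  have C: "n - 1 = 2 * p + 3" "n - 2 = 2 * p + 2" using p by simp_all
  show "g n u w = (u ^ (n - 1) + w ^ (n - 1)) + 2 * u ^ (n - 2) * w
              + (\<Sum>i=1..(n - 4) div 2. u ^ (2 * i) * w ^ (n - 1 - 2 * i))
              + (u + w) * (\<Sum>i=0..(n - 4) div 2. real (n - 1 - 2 * i) * u ^ (2 * i) * w ^ (n - 2 - 2 * i))"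
  proof -
    have G: "g n u w = u^(2*p+3) + w^(2*p+3) + 2 * u^(2*p+2) * w + S1 p u w + (u + w) * S2 p u w"
      by (simp only: p g_ident_clean)
    show ?thesis unfolding A B unfolding C G by (rule refl)
  qed
next
  fix n :: nat
  assume n: "even n \<and> 2 \<le> n"
  then obtain q where q: "n = 2 * q" by (auto elim: evenE)
  define m where "m = q - 1"
  have m: "n = 2 * Suc m" using q n unfolding m_def by simp
  define P where "P = Phi beta k u0"
  have Pc: "continuous_on S P" for S unfolding P_def by (rule Phi_cont)
  have P0: "P 0 = 0" unfolding P_def by (rule Phi0)
  {
    assume h: "- k < u0 \<and> u0 < 0"
    have dec: "\<And>x y. u0 \<le> x \<Longrightarrow> x < y \<Longrightarrow> y \<le> 0 \<Longrightarrow> P y < P x"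
      unfolding P_def using Phi_dec assms by blast
    have inc: "\<And>x y. 0 \<le> x \<Longrightarrow> x < y \<Longrightarrow> y \<le> k \<Longrightarrow> P x < P y"
      unfolding P_def using Phi_inc assms h by blast
    have Pu0: "P u0 > 0" using dec[of u0 0] h P0 by simp
    have Pk: "P k > P u0"
    proof -
      have "beta * (k + u0) * (k - u0) ^ 3 / 12 > 0" using assms h by simp
      then show ?thesis using Phi_k_u0[of beta k u0] unfolding P_def by linarith
    qed
    obtain v where v: "0 \<le> v" "v \<le> k" "P v = P u0"
      using IVT'[of P 0 "P u0" k] Pu0 Pk P0 Pc assms by fastforce
    have v1: "0 < v" "v < k" using v Pu0 Pk P0 by (auto simp: order.order_iff_strict)
    have u1v: "u1 beta k u0 = v"
      unfolding u1_def P_def[symmetric]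
    proof (rule the_eqI)
      show "0 < v \<and> v < k \<and> P v = P u0" using v v1 by simp
      fix y assume y: "0 < y \<and> y < k \<and> P y = P u0"
      show "y = v"
      proof (rule ccontr)
        assume "y \<noteq> v"
        then have "y < v \<or> v < y" by linarith
        then show False using inc[of y v] inc[of v y] y v v1 by force
      qed
    qed
    have "\<forall>u. 0 < u \<and> u < u1 beta k u0 \<longrightarrow> g n u (delta1 beta k u0 u) < 0"
    proof (intro allI impI)
      fix u assume u: "0 < u \<and> u < u1 beta k u0"
      then have uv: "0 < u" "u < v" unfolding u1v by auto
      have Pu: "0 < P u" "P u < P u0" using inc[of 0 u] inc[of u v] uv v v1 P0 by auto
      have ua: "u < - u0"
      proof (rule ccontr)
        assume "\<not> u < - u0"
        then have "P (- u0) \<le> P u" using inc[of "-u0" u] h uv v1 by (cases "- u0 = u") auto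
        moreover have "P (- u0) - P u0 > 0"
        proof -
          have "(- u0)^3 > 0" using h by simp
          then have "2 * beta * (k + u0) * (- u0)^3 / 3 > 0" using assms h by (simp only: zero_less_mult_iff zero_less_divide_iff) simp
          then show ?thesis using Phi_sym[of beta k u0 "- u0"] unfolding P_def by simp
        qed
        ultimately show False using Pu by linarith
      qed
      obtain w where w: "u0 \<le> w" "w \<le> 0" "P w = P u"
        using IVT2'[of P 0 "P u" u0] Pu P0 Pc h by fastforce
      have w1: "u0 < w" "w < 0" using w Pu P0 by (auto simp: order.order_iff_strict)
      have dw: "delta1 beta k u0 u = w"
        unfolding delta1_def P_def[symmetric]
      proof (rule the_eqI)
        show "u0 < w \<and> w < 0 \<and> P w = P u" using w w1 by simp
        fix y assume y: "u0 < y \<and> y < 0 \<and> P y = P u"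
        show "y = w"
        proof (rule ccontr)
          assume "y \<noteq> w"
          then have "y < w \<or> w < y" by linarith
          then show False using dec[of y w] dec[of w y] y w w1 by force
        qed
      qed
      have sym: "P u - P (- u) > 0"
      proof -
        have "2 * beta * (k + u0) * u^3 / 3 > 0" using assms h uv by simp
        then show ?thesis using Phi_sym[of beta k u0 u] unfolding P_def by simp
      qed
      have "w < - u"
      proof (rule ccontr)
        assume "\<not> w < - u"
        then have "P w \<le> P (- u)" using dec[of "-u" w] ua w1 by (cases "w = - u") auto
        then show False using sym w by linarith
      qed
      then show "g n u (delta1 beta k u0 u) < 0" unfolding dw m using g_neg uv by blast
    qed
  }
  then have R1: "- k < u0 \<and> u0 < 0 \<longrightarrow> (\<forall>u. 0 < u \<and> u < u1 beta k u0 \<longrightarrow> g n u (delta1 beta k u0 u) < 0)"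
    by blast
  {
    assume h: "u0 < - k"
    have h0: "u0 < 0" using h assms by simp
    have dec: "\<And>x y. u0 \<le> x \<Longrightarrow> x < y \<Longrightarrow> y \<le> 0 \<Longrightarrow> P y < P x"
      unfolding P_def using Phi_dec assms by blast
    have inc: "\<And>x y. 0 \<le> x \<Longrightarrow> x < y \<Longrightarrow> y \<le> k \<Longrightarrow> P x < P y"
      unfolding P_def using Phi_inc assms h0 by blast
    have Pk0: "P k > 0" using inc[of 0 k] assms P0 by simp
    have Pk: "P k < P u0"
    proof -
      have "(k - u0) ^ 3 > 0" using h assms by simp
      then have "beta * (k + u0) * (k - u0) ^ 3 / 12 < 0" using assms h
        by (simp add: mult_neg_pos mult_pos_neg)
      then show ?thesis using Phi_k_u0[of beta k u0] unfolding P_def by linarith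
    qed
    obtain v where v: "u0 \<le> v" "v \<le> 0" "P v = P k"
      using IVT2'[of P 0 "P k" u0] Pk0 Pk P0 Pc h0 by fastforce
    have v1: "u0 < v" "v < 0" using v Pk0 Pk P0 by (auto simp: order.order_iff_strict)
    have w2v: "w2 beta k u0 = v"
      unfolding w2_def P_def[symmetric]
    proof (rule the_eqI)
      show "u0 < v \<and> v < 0 \<and> P v = P k" using v v1 by simp
      fix y assume y: "u0 < y \<and> y < 0 \<and> P y = P k"
      show "y = v"
      proof (rule ccontr)
        assume "y \<noteq> v"
        then have "y < v \<or> v < y" by linarith
        then show False using dec[of y v] dec[of v y] y v v1 by force
      qed
    qed
    have "\<forall>u. 0 < u \<and> u < k \<longrightarrow> g n (delta2 beta k u0 u) u > 0"
    proof (intro allI impI)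
      fix u assume uv: "0 < u \<and> u < k"
      have Pu: "0 < P u" "P u < P k" using inc[of 0 u] inc[of u k] uv P0 by auto
      obtain w where w: "v \<le> w" "w \<le> 0" "P w = P u"
        using IVT2'[of P 0 "P u" v] Pu P0 Pc v v1 by fastforce
      have w1: "v < w" "w < 0" using w Pu P0 v by (auto simp: order.order_iff_strict)
      have dw: "delta2 beta k u0 u = w"
        unfolding delta2_def P_def[symmetric] w2v
      proof (rule the_eqI)
        show "v < w \<and> w < 0 \<and> P w = P u" using w w1 by simp
        fix y assume y: "v < y \<and> y < 0 \<and> P y = P u"
        show "y = w"
        proof (rule ccontr)
          assume "y \<noteq> w"
          then have "y < w \<or> w < y" by linarith
          then show False using dec[of y w] dec[of w y] y w w1 v1 by force
        qed
      qed
      have sym: "P u - P (- u) < 0"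
      proof -
        have "u^3 > 0" using uv by simp
        then have "2 * beta * (k + u0) * u^3 / 3 < 0" using assms h
          by (simp add: mult_neg_pos mult_pos_neg)
        then show ?thesis using Phi_sym[of beta k u0 u] unfolding P_def by simp
      qed
      have "- u < w"
      proof (rule ccontr)
        assume "\<not> - u < w"
        then have "P (- u) \<le> P w" using dec[of w "-u"] uv w1 v1 by (cases "w = - u") auto
        then show False using sym w by linarith
      qed
      then show "g n (delta2 beta k u0 u) u > 0" unfolding dw m using g_pos uv w1 by blast
    qed
  }
  then have R2: "u0 < - k \<longrightarrow> (\<forall>u. 0 < u \<and> u < k \<longrightarrow> g n (delta2 beta k u0 u) u > 0)"
    by blast
  show "(- k < u0 \<and> u0 < 0 \<longrightarrow> (\<forall>u. 0 < u \<and> u < u1 beta k u0 \<longrightarrow> g n u (delta1 beta k u0 u) < 0))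
        \<and> (u0 < - k \<longrightarrow> (\<forall>u. 0 < u \<and> u < k \<longrightarrow> g n (delta2 beta k u0 u) u > 0))"
    using R1 R2 by blast
qed

end
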